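(* Let $q$ be a prime power and let $1 \le h \le T$ be integers. Let $\mathbf{G}$ be a random $h\times h$ matrix over $\mathbb{F}_q$ with an arbitrary distribution, and let $p(r) = \Pr[h - \operatorname{rank}\mathbf{G} = r]$, $r = 0,\dots,h$, be its rank deficiency distribution. Let $U \in \mathcal{P}(\mathbb{F}_q^T,h)$, and let $\mathbf{X}$ be an $h\times T$ matrix over $\mathbb{F}_q$ chosen uniformly at random from the set of all ordered bases of $U$ (i.e., all $h\times T$ matrices whose rows span $U$; there are $\prod_{i=1}^h (q^h - q^{i-1})$ of them), independently of $\mathbf{G}$. Let $\mathbf{Y} = \mathbf{G}\mathbf{X}$. Then for every subspace $V$ of $\mathbb{F}_q^T$ with $\dim V \le h$, $$\Pr\big[\langle \mathbf{Y}\rangle = V\big] = \begin{cases} \dfrac{p(h-\dim V)}{\binom{h}{\dim V}_q}, & \text{if } V \subseteq U,\\[2mm] 0, & \text{otherwise.}\end{cases}$$ In particular, this transition probability depends only on $p$, $h$, $\dim V$, and whether $V\subseteq U$, and not otherwise on the distribution of $\mathbf{G}$.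
   Context: $\mathbb{F}_q$ is the finite field with $q$ elements. For a matrix $M$ over $\mathbb{F}_q$, $\langle M\rangle$ denotes the subspace spanned by its rows. $\mathcal{P}(\mathbb{F}_q^T,k)$ denotes the Grassmannian, the set of all $k$-dimensional subspaces of $\mathbb{F}_q^T$. The $q$-ary Gaussian coefficient is $\binom{n}{\ell}_q = \prod_{i=0}^{\ell-1}\frac{q^{n-i}-1}{q^{\ell-i}-1}$, the number of $\ell$-dimensional subspaces of an $n$-dimensional vector space over $\mathbb{F}_q$ (with $\binom{n}{0}_q = 1$). *)

theory Defs
  imports "Jordan_Normal_Form.DL_Rank" "HOL-Probability.Probability_Mass_Function"
begin

definition gauss_binom :: "nat \<Rightarrow> nat \<Rightarrow> nat \<Rightarrow> real" where
  "gauss_binom q n l = (\<Prod>i<l. (real q ^ (n - i) - 1) / (real q ^ (l - i) - 1))"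

definition is_subspace :: "'a::field itself \<Rightarrow> nat \<Rightarrow> 'a Matrix.vec set \<Rightarrow> bool" where
  "is_subspace ty T W = VectorSpace.subspace class_ring W (module_vec ty T)"

definition sub_dim :: "'a::field itself \<Rightarrow> nat \<Rightarrow> 'a Matrix.vec set \<Rightarrow> nat" where
  "sub_dim ty T W = vectorspace.dim class_ring ((module_vec ty T)\<lparr>carrier := W\<rparr>)"

definition rowsp :: "nat \<Rightarrow> 'a::field mat \<Rightarrow> 'a Matrix.vec set" where
  "rowsp T M = vec_space.row_space T M"

definition mrank :: "nat \<Rightarrow> 'a::field mat \<Rightarrow> nat" where
  "mrank h M = vec_space.rank h M"

end

theory Submission
  imports Defs
begin

lemma card_carrier_vec:
  "card (carrier_vec n :: 'a::finite Matrix.vec set) = CARD('a) ^ n" (is ?A)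
  and finite_carrier_vec: "finite (carrier_vec n :: 'a::finite Matrix.vec set)" (is ?B)
proof -
  have b: "bij_betw (\<lambda>v. restrict (\<lambda>i. v $ i) {0..<n}) (carrier_vec n :: 'a Matrix.vec set) ({0..<n} \<rightarrow>\<^sub>E (UNIV::'a set))"
    by (rule bij_betwI[where g="\<lambda>f. Matrix.vec n f"]) (auto simp: fun_eq_iff PiE_def extensional_def)
  have "card ({0..<n} \<rightarrow>\<^sub>E (UNIV::'a set)) = CARD('a) ^ n"
    by (simp add: card_PiE)
  moreover have "finite ({0..<n} \<rightarrow>\<^sub>E (UNIV::'a set))" by (simp add: finite_PiE)
  ultimately show ?A ?B using b bij_betw_same_card bij_betw_finite by metis+
qed

lemma card_carrier_mat:
  "card (carrier_mat m n :: 'a::finite mat set) = CARD('a) ^ (m*n)" (is ?A)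
  and finite_carrier_mat: "finite (carrier_mat m n :: 'a::finite mat set)" (is ?B)
proof -
  have b: "bij_betw (\<lambda>A. restrict (\<lambda>ij. A $$ ij) ({0..<m}\<times>{0..<n})) (carrier_mat m n :: 'a mat set) (({0..<m}\<times>{0..<n}) \<rightarrow>\<^sub>E (UNIV::'a set))"
    by (rule bij_betwI[where g="\<lambda>f. Matrix.mat m n f"]) (auto simp: fun_eq_iff PiE_def extensional_def)
  have "card (({0..<m}\<times>{0..<n}) \<rightarrow>\<^sub>E (UNIV::'a set)) = CARD('a) ^ (m*n)"
    by (simp add: card_PiE card_cartesian_product)
  moreover have "finite (({0..<m}\<times>{0..<n}) \<rightarrow>\<^sub>E (UNIV::'a set))" by (simp add: finite_PiE)
  ultimately show ?A ?B using b bij_betw_same_card bij_betw_finite by metis+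
qed

lemma card_field_ge2: "2 \<le> CARD('a::{finite,field})"
proof -
  have "card {0::'a, 1} = 2" by simp
  moreover have "card {0::'a, 1} \<le> CARD('a)" by (rule card_mono) auto
  ultimately show ?thesis by simp
qed

definition lspan :: "nat \<Rightarrow> 'a::field Matrix.vec list \<Rightarrow> 'a Matrix.vec set" where
  "lspan n vs = (\<lambda>y. mat_of_cols n vs *\<^sub>v y) ` carrier_vec (length vs)"

lemma mat_of_cols_Cons_mult:
  fixes vs :: "'a::field Matrix.vec list"
  assumes y: "y \<in> carrier_vec (Suc (length vs))" and u: "u \<in> carrier_vec n"
  shows "mat_of_cols n (u # vs) *\<^sub>v y = y $ 0 \<cdot>\<^sub>v u + mat_of_cols n vs *\<^sub>v Matrix.vec (length vs) (\<lambda>i. y $ Suc i)"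
proof (rule eq_vecI)
  fix i assume "i < dim_vec (y $ 0 \<cdot>\<^sub>v u + mat_of_cols n vs *\<^sub>v Matrix.vec (length vs) (\<lambda>i. y $ Suc i))"
  hence i: "i < n" by simp
  have "(mat_of_cols n (u # vs) *\<^sub>v y) $ i = (\<Sum>j<Suc (length vs). mat_of_cols n (u # vs) $$ (i,j) * y $ j)"
    using i y by (simp add: scalar_prod_def atLeast0LessThan)
  also have "\<dots> = mat_of_cols n (u # vs) $$ (i,0) * y $ 0 + (\<Sum>j<length vs. mat_of_cols n (u # vs) $$ (i,Suc j) * y $ Suc j)"
    by (subst sum.lessThan_Suc_shift) simp
  also have "\<dots> = u $ i * y $ 0 + (\<Sum>j<length vs. mat_of_cols n vs $$ (i,j) * y $ Suc j)"
    using i by (simp add: mat_of_cols_Cons_index_0 mat_of_cols_Cons_index_Suc)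
  also have "\<dots> = (y $ 0 \<cdot>\<^sub>v u + mat_of_cols n vs *\<^sub>v Matrix.vec (length vs) (\<lambda>i. y $ Suc i)) $ i"
    using i u by (simp add: scalar_prod_def atLeast0LessThan ac_simps)
  finally show "(mat_of_cols n (u # vs) *\<^sub>v y) $ i = (y $ 0 \<cdot>\<^sub>v u + mat_of_cols n vs *\<^sub>v Matrix.vec (length vs) (\<lambda>i. y $ Suc i)) $ i" .
qed simp

lemma lspan_carrier: "lspan n vs \<subseteq> carrier_vec n"
  unfolding lspan_def by (intro image_subsetI carrier_vecI) simp

lemma finite_lspan: "finite (lspan n (vs :: 'a::{finite,field} Matrix.vec list))"
  unfolding lspan_def by (intro finite_imageI finite_carrier_vec)

lemma card_lspan_le: "card (lspan n (vs :: 'a::{finite,field} Matrix.vec list)) \<le> CARD('a) ^ length vs"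
  unfolding lspan_def using card_image_le[OF finite_carrier_vec, of "\<lambda>y. mat_of_cols n vs *\<^sub>v y" "length vs"]
  by (simp add: card_carrier_vec)

lemma lspan_Nil: "lspan n [] = {0\<^sub>v n :: 'a::field Matrix.vec}"
proof -
  have "\<And>y. y \<in> carrier_vec 0 \<Longrightarrow> mat_of_cols n [] *\<^sub>v y = (0\<^sub>v n :: 'a Matrix.vec)"
    by (intro eq_vecI) (auto simp: scalar_prod_def)
  moreover have "carrier_vec 0 = {0\<^sub>v 0 :: 'a Matrix.vec}" by auto
  ultimately show ?thesis unfolding lspan_def by simp
qed

lemma lspan_Cons:
  fixes vs :: "'a::field Matrix.vec list"
  assumes u: "u \<in> carrier_vec n"
  shows "lspan n (u # vs) = (\<lambda>(c,w). c \<cdot>\<^sub>v u + w) ` (UNIV \<times> lspan n vs)"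
proof (intro equalityI subsetI)
  fix x assume "x \<in> lspan n (u # vs)"
  then obtain y where y: "y \<in> carrier_vec (Suc (length vs))" and x: "x = mat_of_cols n (u # vs) *\<^sub>v y"
    unfolding lspan_def by auto
  have "x = y $ 0 \<cdot>\<^sub>v u + mat_of_cols n vs *\<^sub>v Matrix.vec (length vs) (\<lambda>i. y $ Suc i)"
    using mat_of_cols_Cons_mult[OF y u] x by simp
  moreover have "mat_of_cols n vs *\<^sub>v Matrix.vec (length vs) (\<lambda>i. y $ Suc i) \<in> lspan n vs"
    unfolding lspan_def by auto
  ultimately show "x \<in> (\<lambda>(c,w). c \<cdot>\<^sub>v u + w) ` (UNIV \<times> lspan n vs)" by force
next
  fix x assume "x \<in> (\<lambda>(c,w). c \<cdot>\<^sub>v u + w) ` (UNIV \<times> lspan n vs)"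
  then obtain c z where z: "z \<in> carrier_vec (length vs)" and x: "x = c \<cdot>\<^sub>v u + mat_of_cols n vs *\<^sub>v z"
    unfolding lspan_def by auto
  define y where "y = Matrix.vec (Suc (length vs)) (\<lambda>i. if i = 0 then c else z $ (i - 1))"
  have y: "y \<in> carrier_vec (Suc (length vs))" unfolding y_def by simp
  have y0: "y $ 0 = c" unfolding y_def by simp
  have yz: "Matrix.vec (length vs) (\<lambda>i. y $ Suc i) = z"
    using z unfolding y_def by (intro eq_vecI) auto
  have "x = mat_of_cols n (u # vs) *\<^sub>v y"
    using mat_of_cols_Cons_mult[OF y u] x y0 yz by simp
  then show "x \<in> lspan n (u # vs)" unfolding lspan_def using y by auto
qed

definition subsp :: "nat \<Rightarrow> 'a::field Matrix.vec set \<Rightarrow> bool" where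
  "subsp n W \<longleftrightarrow> W \<subseteq> carrier_vec n \<and> 0\<^sub>v n \<in> W \<and> (\<forall>x\<in>W. \<forall>y\<in>W. x + y \<in> W)
     \<and> (\<forall>c x. x \<in> W \<longrightarrow> c \<cdot>\<^sub>v x \<in> W)"

lemma subsp_image:
  fixes M :: "'a::field mat"
  assumes M: "M \<in> carrier_mat n m"
  shows "subsp n ((\<lambda>y. M *\<^sub>v y) ` carrier_vec m)"
proof -
  have z: "M *\<^sub>v 0\<^sub>v m = 0\<^sub>v n" using M by (intro eq_vecI) (auto simp: scalar_prod_def)
  show ?thesis unfolding subsp_def
  proof (intro conjI ballI allI impI)
    show "(\<lambda>y. M *\<^sub>v y) ` carrier_vec m \<subseteq> carrier_vec n" using M by auto
    show "0\<^sub>v n \<in> (\<lambda>y. M *\<^sub>v y) ` carrier_vec m" using z by (intro image_eqI[where x="0\<^sub>v m"]) auto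
  next
    fix x y assume "x \<in> (\<lambda>y. M *\<^sub>v y) ` carrier_vec m" "y \<in> (\<lambda>y. M *\<^sub>v y) ` carrier_vec m"
    then obtain a b where ab: "a \<in> carrier_vec m" "b \<in> carrier_vec m" "x = M *\<^sub>v a" "y = M *\<^sub>v b" by auto
    then have "x + y = M *\<^sub>v (a + b)" using mult_add_distrib_mat_vec[OF M] by simp
    then show "x + y \<in> (\<lambda>y. M *\<^sub>v y) ` carrier_vec m" using ab by auto
  next
    fix c x assume "x \<in> (\<lambda>y. M *\<^sub>v y) ` carrier_vec m"
    then obtain a where a: "a \<in> carrier_vec m" "x = M *\<^sub>v a" by auto
    then have "c \<cdot>\<^sub>v x = M *\<^sub>v (c \<cdot>\<^sub>v a)" using mult_mat_vec[OF M] by simp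
    then show "c \<cdot>\<^sub>v x \<in> (\<lambda>y. M *\<^sub>v y) ` carrier_vec m" using a by auto
  qed
qed

lemma subsp_lspan: "subsp n (lspan n vs)"
  unfolding lspan_def by (rule subsp_image) auto

lemma subsp_carrier: "subsp n (carrier_vec n)"
  unfolding subsp_def by auto

lemma subsp_diff:
  assumes "subsp n W" "x \<in> W" "y \<in> W"
  shows "x + (-1) \<cdot>\<^sub>v y \<in> W"
  using assms unfolding subsp_def by blast

lemma lspan_subset:
  fixes vs :: "'a::field Matrix.vec list"
  assumes W: "subsp n W" shows "set vs \<subseteq> W \<Longrightarrow> lspan n vs \<subseteq> W"
proof (induction vs)
  case Nil then show ?case using W by (simp add: lspan_Nil subsp_def)
next
  case (Cons u vs)
  have u: "u \<in> carrier_vec n" using Cons.prems W by (auto simp: subsp_def)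
  show ?case unfolding lspan_Cons[OF u]
    using Cons W unfolding subsp_def by auto
qed

lemma in_lspan:
  fixes vs :: "'a::field Matrix.vec list"
  shows "set vs \<subseteq> carrier_vec n \<Longrightarrow> set vs \<subseteq> lspan n vs"
proof (induction vs)
  case Nil then show ?case by simp
next
  case (Cons u vs)
  have u: "u \<in> carrier_vec n" using Cons.prems by auto
  have z: "0\<^sub>v n \<in> lspan n vs" using subsp_lspan[of n vs] by (simp add: subsp_def)
  have e1: "u = (\<lambda>(c,w). c \<cdot>\<^sub>v u + w) (1, 0\<^sub>v n)" using u by simp
  have 1: "u \<in> lspan n (u # vs)" unfolding lspan_Cons[OF u]
    unfolding image_iff using e1 z by (intro bexI[where x="(1, 0\<^sub>v n)"]) simp_all
  have "v \<in> lspan n (u # vs)" if v: "v \<in> set vs" for v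
  proof -
    have vl: "v \<in> lspan n vs" using Cons.IH Cons.prems v by auto
    have vc: "v \<in> carrier_vec n" using Cons.prems v by auto
    have e2: "v = (\<lambda>(c,w). c \<cdot>\<^sub>v u + w) (0, v)" using u vc by (intro eq_vecI) auto
    show ?thesis unfolding lspan_Cons[OF u]
      unfolding image_iff using e2 vl by (intro bexI[where x="(0, v)"]) simp_all
  qed
  then show ?case using 1 by auto
qed

definition indep :: "nat \<Rightarrow> 'a::{finite,field} Matrix.vec list \<Rightarrow> bool" where
  "indep n vs \<longleftrightarrow> card (lspan n vs) = CARD('a) ^ length vs"

lemma indep_Nil: "indep n []"
  unfolding indep_def by (simp add: lspan_Nil)

lemma indep_Cons:
  fixes vs :: "'a::{finite,field} Matrix.vec list"
  assumes u: "u \<in> carrier_vec n"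
  shows "indep n (u # vs) \<longleftrightarrow> indep n vs \<and> u \<notin> lspan n vs"
proof (cases "u \<in> lspan n vs")
  case True
  have "lspan n (u # vs) \<subseteq> lspan n vs"
    unfolding lspan_Cons[OF u] using True subsp_lspan[of n vs] unfolding subsp_def by auto
  then have "card (lspan n (u # vs)) \<le> card (lspan n vs)" by (intro card_mono finite_lspan)
  also have "\<dots> \<le> CARD('a) ^ length vs" by (rule card_lspan_le)
  also have "\<dots> < CARD('a) ^ length (u # vs)" using card_field_ge2[where 'a='a] by simp
  finally show ?thesis using True unfolding indep_def by simp
next
  case False
  let ?L = "lspan n vs"
  have S: "subsp n ?L" by (rule subsp_lspan)
  have Lc: "?L \<subseteq> carrier_vec n" by (rule lspan_carrier)
  have inj: "inj_on (\<lambda>(c,w). c \<cdot>\<^sub>v u + w) (UNIV \<times> ?L)"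
  proof (rule inj_onI, clarify)
    fix c w c' w' assume w: "w \<in> ?L" and w': "w' \<in> ?L" and eq: "c \<cdot>\<^sub>v u + w = c' \<cdot>\<^sub>v u + w'"
    have wc: "w \<in> carrier_vec n" "w' \<in> carrier_vec n" using w w' Lc by auto
    have comp: "c * u $ i + w $ i = c' * u $ i + w' $ i" if "i < n" for i
    proof -
      have "(c \<cdot>\<^sub>v u + w) $ i = (c' \<cdot>\<^sub>v u + w') $ i" using eq by simp
      then show ?thesis using that u wc by simp
    qed
    show "c = c' \<and> w = w'"
    proof (cases "c = c'")
      case True
      then have "w = w'" using comp wc by (intro eq_vecI) auto
      then show ?thesis using True by simp
    next
      case ne: False
      define z where "z = (1 / (c - c')) \<cdot>\<^sub>v (w' + (-1) \<cdot>\<^sub>v w)"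
      have zL: "z \<in> ?L" unfolding z_def using subsp_diff[OF S w' w] S unfolding subsp_def by blast
      have "z = u"
      proof (rule eq_vecI)
        fix i assume "i < dim_vec u"
        then have i: "i < n" using u by simp
        have "w' $ i - w $ i = (c - c') * u $ i" using comp[OF i] by (simp add: algebra_simps)
        then show "z $ i = u $ i" using i wc ne unfolding z_def by (simp add: field_simps)
      qed (use u wc in \<open>simp add: z_def\<close>)
      then show ?thesis using zL False by simp
    qed
  qed
  have "card (lspan n (u # vs)) = card ((UNIV::'a set) \<times> ?L)"
    unfolding lspan_Cons[OF u] using card_image[OF inj] by simp
  also have "\<dots> = CARD('a) * card ?L" by (simp add: card_cartesian_product)
  finally have "card (lspan n (u # vs)) = CARD('a) * card ?L" .
  then show ?thesis using False card_field_ge2[where 'a='a] unfolding indep_def by simp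
qed

lemma indep_append: "set us \<subseteq> carrier_vec n \<Longrightarrow> indep n (us @ ws) \<Longrightarrow> indep n ws"
  by (induction us) (auto simp: indep_Cons)

lemma indep_lspan_eq:
  fixes vs :: "'a::{finite,field} Matrix.vec list"
  assumes W: "subsp n W" "finite W" and vs: "set vs \<subseteq> W" and c: "card W = CARD('a) ^ length vs"
  shows "lspan n vs = W \<longleftrightarrow> indep n vs"
proof
  assume "lspan n vs = W" then show "indep n vs" using c unfolding indep_def by simp
next
  assume "indep n vs"
  then have "card (lspan n vs) = card W" using c unfolding indep_def by simp
  then show "lspan n vs = W" using lspan_subset[OF W(1) vs] W(2) by (simp add: card_subset_eq)
qed



lemma count_ext:
  fixes ws :: "'a::{finite,field} Matrix.vec list"
  assumes W: "subsp n W" and cW: "card W = CARD('a) ^ k'" and ws: "set ws \<subseteq> W" "indep n ws"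
  shows "card {us. length us = m \<and> set us \<subseteq> W \<and> indep n (us @ ws)}
       = (\<Prod>i<m. CARD('a) ^ k' - CARD('a) ^ (length ws + i))"
proof (induction m)
  case 0
  have "{us. length us = 0 \<and> set us \<subseteq> W \<and> indep n (us @ ws)} = {[]}" using ws by auto
  then show ?case by simp
next
  case (Suc m)
  let ?q = "CARD('a)"
  define S where "S m = {us. length us = m \<and> set us \<subseteq> W \<and> indep n (us @ ws)}" for m
  have Wc: "W \<subseteq> carrier_vec n" using W by (simp add: subsp_def)
  have finW: "finite W" using finite_subset[OF Wc finite_carrier_vec] .
  have finS: "finite (S m)"
    by (rule finite_subset[of _ "{us. set us \<subseteq> W \<and> length us = m}"])
       (auto simp: S_def intro: finite_lists_length_eq[OF finW])
  have eq: "S (Suc m) = (\<lambda>(us,u). u # us) ` (SIGMA us:S m. W - lspan n (us @ ws))"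
  proof (intro equalityI subsetI)
    fix xs assume "xs \<in> S (Suc m)"
    then obtain u us where xs: "xs = u # us" "length us = m" "u \<in> W" "set us \<subseteq> W" "indep n (u # (us @ ws))"
      unfolding S_def by (cases xs) auto
    have u: "u \<in> carrier_vec n" using xs Wc by auto
    have i: "indep n (us @ ws)" "u \<notin> lspan n (us @ ws)" using xs(5) indep_Cons[OF u] by auto
    have "(us, u) \<in> (SIGMA us:S m. W - lspan n (us @ ws))" using xs i unfolding S_def by auto
    then show "xs \<in> (\<lambda>(us,u). u # us) ` (SIGMA us:S m. W - lspan n (us @ ws))"
      unfolding image_iff using xs(1) by (intro bexI[where x="(us,u)"]) simp_all
  next
    fix xs assume "xs \<in> (\<lambda>(us,u). u # us) ` (SIGMA us:S m. W - lspan n (us @ ws))"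
    then obtain us u where xs: "xs = u # us" "us \<in> S m" "u \<in> W" "u \<notin> lspan n (us @ ws)" by auto
    have u: "u \<in> carrier_vec n" using xs Wc by auto
    show "xs \<in> S (Suc m)" using xs indep_Cons[OF u, of "us @ ws"] unfolding S_def by auto
  qed
  have inj: "inj_on (\<lambda>(us,u). u # us) (SIGMA us:S m. W - lspan n (us @ ws))"
    by (auto simp: inj_on_def)
  have c: "card (W - lspan n (us @ ws)) = ?q ^ k' - ?q ^ (length ws + m)" if "us \<in> S m" for us
  proof -
    have sub: "lspan n (us @ ws) \<subseteq> W" using that ws lspan_subset[OF W] unfolding S_def by auto
    have "card (lspan n (us @ ws)) = ?q ^ (length ws + m)"
      using that unfolding S_def indep_def by (simp add: add.commute)
    then show ?thesis using card_Diff_subset[OF finite_lspan sub] cW by simp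
  qed
  have "card (S (Suc m)) = card (SIGMA us:S m. W - lspan n (us @ ws))"
    unfolding eq using card_image[OF inj] by simp
  also have "\<dots> = (\<Sum>us\<in>S m. card (W - lspan n (us @ ws)))"
    using finS finW by (intro card_SigmaI) auto
  also have "\<dots> = card (S m) * (?q ^ k' - ?q ^ (length ws + m))" using c by simp
  finally show ?case using Suc.IH unfolding S_def by simp
qed

lemma exists_indep:
  fixes ws :: "'a::{finite,field} Matrix.vec list"
  assumes W: "subsp n W" and cW: "card W = CARD('a) ^ k'" and ws: "set ws \<subseteq> W" "indep n ws"
    and le: "length ws + m \<le> k'"
  shows "\<exists>us. length us = m \<and> set us \<subseteq> W \<and> indep n (us @ ws)"
proof -
  have q: "1 < CARD('a)" using card_field_ge2[where 'a='a] by simp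
  have "0 < (\<Prod>i<m. CARD('a) ^ k' - CARD('a) ^ (length ws + i))"
  proof (rule prod_pos)
    fix i assume "i \<in> {..<m}"
    then have "length ws + i < k'" using le by auto
    then have "CARD('a) ^ (length ws + i) < CARD('a) ^ k'" using q by (rule power_strict_increasing)
    then show "0 < CARD('a) ^ k' - CARD('a) ^ (length ws + i)" by simp
  qed
  then have "{us. length us = m \<and> set us \<subseteq> W \<and> indep n (us @ ws)} \<noteq> {}"
    using count_ext[OF W cW ws, of m] by (metis card.empty less_irrefl)
  then show ?thesis by auto
qed

lemma exists_basis:
  fixes W :: "'a::{finite,field} Matrix.vec set"
  assumes W: "subsp n W" and cW: "card W = CARD('a) ^ d"
  shows "\<exists>ws. length ws = d \<and> set ws \<subseteq> W \<and> indep n ws \<and> lspan n ws = W"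
proof -
  have z: "set [] \<subseteq> W" "indep n ([] :: 'a Matrix.vec list)" by (auto simp: indep_Nil)
  obtain us where us: "length us = d" "set us \<subseteq> W" "indep n (us @ [])"
    using exists_indep[OF W cW z, of d] by auto
  have Wc: "W \<subseteq> carrier_vec n" using W by (simp add: subsp_def)
  have finW: "finite W" using finite_subset[OF Wc finite_carrier_vec] .
  have "lspan n us = W" using indep_lspan_eq[OF W finW us(2)] us cW by simp
  then show ?thesis using us by auto
qed

lemma card_vectorspace:
  fixes VS :: "('a::{finite,field}, 'c, 'd) module_scheme"
  assumes vsp: "vectorspace class_ring VS" and fd: "vectorspace.fin_dim class_ring VS"
  shows "card (carrier VS) = CARD('a) ^ vectorspace.dim class_ring VS"
proof -
  interpret V: vectorspace class_ring VS by (rule vsp)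
  obtain \<beta> where fb: "finite \<beta>" "V.basis \<beta>" using V.finite_basis_exists[OF fd] by blast
  have dim: "V.dim = card \<beta>" by (rule V.dim_basis[OF fb])
  have \<beta>c: "\<beta> \<subseteq> carrier VS" using fb(2) unfolding V.basis_def by simp
  have crit: "\<And>v. v \<in> carrier VS \<Longrightarrow> \<exists>!a. a \<in> \<beta> \<rightarrow>\<^sub>E carrier class_ring \<and> V.lincomb a \<beta> = v"
    using V.basis_criterion[OF fb(1) \<beta>c] fb(2) by blast
  have cr: "carrier (class_ring :: 'a ring) = UNIV" by simp
  have bij: "bij_betw (\<lambda>a. V.lincomb a \<beta>) (\<beta> \<rightarrow>\<^sub>E (UNIV::'a set)) (carrier VS)"
    unfolding bij_betw_def
  proof
    show "inj_on (\<lambda>a. V.lincomb a \<beta>) (\<beta> \<rightarrow>\<^sub>E UNIV)"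
    proof (rule inj_onI)
      fix a b assume a: "a \<in> \<beta> \<rightarrow>\<^sub>E UNIV" and b: "b \<in> \<beta> \<rightarrow>\<^sub>E UNIV" and e: "V.lincomb a \<beta> = V.lincomb b \<beta>"
      have "V.lincomb a \<beta> \<in> carrier VS" using a \<beta>c cr by (intro V.lincomb_closed) auto
      from crit[OF this] a b e cr show "a = b" by auto
    qed
    show "(\<lambda>a. V.lincomb a \<beta>) ` (\<beta> \<rightarrow>\<^sub>E UNIV) = carrier VS"
    proof (intro equalityI subsetI)
      fix x assume "x \<in> (\<lambda>a. V.lincomb a \<beta>) ` (\<beta> \<rightarrow>\<^sub>E UNIV)"
      then show "x \<in> carrier VS" using \<beta>c cr by (auto intro: V.lincomb_closed)
    next
      fix x assume "x \<in> carrier VS"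
      from crit[OF this] cr show "x \<in> (\<lambda>a. V.lincomb a \<beta>) ` (\<beta> \<rightarrow>\<^sub>E UNIV)" by auto
    qed
  qed
  have "card (\<beta> \<rightarrow>\<^sub>E (UNIV::'a set)) = CARD('a) ^ card \<beta>" by (simp add: card_PiE fb(1))
  then show ?thesis using bij_betw_same_card[OF bij] dim by simp
qed

lemma card_subspace:
  assumes "is_subspace TYPE('a::{finite,field}) T W"
  shows "card W = CARD('a) ^ sub_dim TYPE('a) T W"
proof -
  interpret vec_space "TYPE('a)" T .
  have sub: "VectorSpace.subspace class_ring W V" using assms by (simp add: is_subspace_def)
  have vsp: "vectorspace class_ring (vs W)" by (rule subspace_is_vs[OF sub])
  have Wc: "W \<subseteq> carrier V" using sub by (simp add: VectorSpace.subspace_def submodule_def)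
  have "span W \<subseteq> W" using span_is_subset[OF subset_refl] sub by (simp add: subspace_def)
  moreover have "W \<subseteq> span W" using in_own_span Wc by simp
  ultimately have sp: "span W = W" by auto
  have finW: "finite W" using finite_subset[OF Wc] finite_carrier_vec[where 'a='a, of T] by simp
  have fd: "vectorspace.fin_dim class_ring (vs W)" using fin_dim_span[OF finW Wc] sp by simp
  show ?thesis using card_vectorspace[OF vsp fd] unfolding sub_dim_def by simp
qed

lemma card_colspace:
  fixes G :: "'a::{finite,field} mat"
  assumes G: "G \<in> carrier_mat n m"
  shows "card ((\<lambda>y. G *\<^sub>v y) ` carrier_vec m) = CARD('a) ^ mrank n G"
proof -
  interpret vec_space "TYPE('a)" n .
  have cs: "col_space G = (\<lambda>y. G *\<^sub>v y) ` carrier_vec m"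
    using col_space_eq[OF G] G by auto
  have sc: "set (cols G) \<subseteq> carrier_vec n" using G by (auto simp: cols_def)
  have vsp: "vectorspace class_ring (span_vs (set (cols G)))"
    using span_is_subspace[OF sc] subspace_is_vs by simp
  have fd: "vectorspace.fin_dim class_ring (span_vs (set (cols G)))"
    by (rule fin_dim_span_cols[OF G])
  have "card (span (set (cols G))) = CARD('a) ^ rank G"
    using card_vectorspace[OF vsp fd] unfolding rank_def by simp
  then show ?thesis using cs unfolding col_space_def mrank_def by simp
qed



lemma mult_unit_vec_col:
  fixes M :: "'a::field mat"
  assumes M: "M \<in> carrier_mat k n" and j: "j < n"
  shows "M *\<^sub>v unit_vec n j = col M j"
  using M j by (intro eq_vecI) (auto simp: scalar_prod_right_unit)

lemma mat_eq_on_carrier: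
  fixes M M' :: "'a::field mat"
  assumes M: "M \<in> carrier_mat k n" and M': "M' \<in> carrier_mat k n"
    and e: "\<And>y. y \<in> carrier_vec n \<Longrightarrow> M *\<^sub>v y = M' *\<^sub>v y"
  shows "M = M'"
proof (rule eq_matI)
  fix i j assume i: "i < dim_row M'" and j: "j < dim_col M'"
  have "col M j = col M' j"
    using mult_unit_vec_col[OF M, of j] mult_unit_vec_col[OF M', of j] e[of "unit_vec n j"] j M' by simp
  then have "col M j $ i = col M' j $ i" by simp
  then show "M $$ (i, j) = M' $$ (i, j)" using i j M M' by simp
qed (use M M' in auto)

lemma mat_of_cols_map_mult:
  fixes M :: "'a::field mat"
  assumes M: "M \<in> carrier_mat k n" and vs: "set vs \<subseteq> carrier_vec n"
  shows "mat_of_cols k (map (\<lambda>v. M *\<^sub>v v) vs) = M * mat_of_cols n vs"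
proof (rule eq_matI)
  fix i j assume i: "i < dim_row (M * mat_of_cols n vs)" and j: "j < dim_col (M * mat_of_cols n vs)"
  have vj: "vs ! j \<in> carrier_vec n" using vs j by auto
  have "(M * mat_of_cols n vs) $$ (i, j) = Matrix.row M i \<bullet> col (mat_of_cols n vs) j" using i j by simp
  also have "\<dots> = Matrix.row M i \<bullet> vs ! j" using j vj by (simp add: col_mat_of_cols)
  also have "\<dots> = mat_of_cols k (map (\<lambda>v. M *\<^sub>v v) vs) $$ (i, j)" using i j M by (simp add: mat_of_cols_index)
  finally show "mat_of_cols k (map (\<lambda>v. M *\<^sub>v v) vs) $$ (i, j) = (M * mat_of_cols n vs) $$ (i, j)" ..
qed (use M in auto)

lemma lspan_map:
  fixes M :: "'a::field mat"
  assumes M: "M \<in> carrier_mat k n" and vs: "set vs \<subseteq> carrier_vec n"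
  shows "lspan k (map (\<lambda>v. M *\<^sub>v v) vs) = (\<lambda>v. M *\<^sub>v v) ` lspan n vs"
proof -
  have C: "mat_of_cols n vs \<in> carrier_mat n (length vs)" by simp
  have "lspan k (map (\<lambda>v. M *\<^sub>v v) vs) = (\<lambda>y. (M * mat_of_cols n vs) *\<^sub>v y) ` carrier_vec (length vs)"
    unfolding lspan_def mat_of_cols_map_mult[OF M vs] by simp
  also have "\<dots> = (\<lambda>y. M *\<^sub>v (mat_of_cols n vs *\<^sub>v y)) ` carrier_vec (length vs)"
    using assoc_mult_mat_vec[OF M C] by (intro image_cong) auto
  also have "\<dots> = (\<lambda>v. M *\<^sub>v v) ` lspan n vs" unfolding lspan_def by (simp add: image_image)
  finally show ?thesis .
qed

lemma agree_lspan:
  fixes M M' :: "'a::field mat"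
  assumes M: "M \<in> carrier_mat k n" and M': "M' \<in> carrier_mat k n" and vs: "set vs \<subseteq> carrier_vec n"
    and e: "\<And>v. v \<in> set vs \<Longrightarrow> M *\<^sub>v v = M' *\<^sub>v v" and y: "y \<in> lspan n vs"
  shows "M *\<^sub>v y = M' *\<^sub>v y"
proof -
  have C: "mat_of_cols n vs \<in> carrier_mat n (length vs)" by simp
  have eq: "M * mat_of_cols n vs = M' * mat_of_cols n vs"
    using mat_of_cols_map_mult[OF M vs] mat_of_cols_map_mult[OF M' vs] e
    by (metis map_eq_conv)
  obtain z where z: "z \<in> carrier_vec (length vs)" "y = mat_of_cols n vs *\<^sub>v z" using y unfolding lspan_def by auto
  have "M *\<^sub>v y = (M * mat_of_cols n vs) *\<^sub>v z" using z assoc_mult_mat_vec[OF M C] by simp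
  also have "\<dots> = (M' * mat_of_cols n vs) *\<^sub>v z" using eq by simp
  also have "\<dots> = M' *\<^sub>v y" using z assoc_mult_mat_vec[OF M' C] by simp
  finally show ?thesis .
qed

lemma card_img_transpose_le:
  fixes G :: "'a::{finite,field} mat"
  assumes G: "G \<in> carrier_mat m n"
  shows "card ((\<lambda>y. G\<^sup>T *\<^sub>v y) ` carrier_vec m) \<le> card ((\<lambda>y. G *\<^sub>v y) ` carrier_vec n)"
proof -
  let ?C = "(\<lambda>y. G *\<^sub>v y) ` carrier_vec n"
  let ?c = "mrank m G"
  have sC: "subsp m ?C" by (rule subsp_image[OF G])
  have cC: "card ?C = CARD('a) ^ ?c" by (rule card_colspace[OF G])
  obtain bs where bs: "length bs = ?c" "set bs \<subseteq> ?C" "indep m bs" "lspan m bs = ?C"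
    using exists_basis[OF sC cC] by blast
  define B where "B = mat_of_cols m bs"
  have B: "B \<in> carrier_mat m ?c" unfolding B_def bs(1)[symmetric] by simp
  have ex: "\<exists>r. r \<in> carrier_vec ?c \<and> B *\<^sub>v r = col G j" if j: "j < n" for j
  proof -
    have "col G j \<in> ?C" using mult_unit_vec_col[OF G j] by (intro image_eqI[where x="unit_vec n j"]) auto
    then have "col G j \<in> lspan m bs" using bs(4) by simp
    then show ?thesis unfolding lspan_def B_def using bs(1) by auto
  qed
  define r where "r j = (SOME r. r \<in> carrier_vec ?c \<and> B *\<^sub>v r = col G j)" for j
  have r: "r j \<in> carrier_vec ?c \<and> B *\<^sub>v r j = col G j" if "j < n" for j
    unfolding r_def using someI_ex[OF ex[OF that]] .
  define R where "R = Matrix.mat ?c n (\<lambda>(i,j). r j $ i)"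
  have R: "R \<in> carrier_mat ?c n" unfolding R_def by simp
  have colR: "col R j = r j" if "j < n" for j
    using r[OF that] that unfolding R_def by (intro eq_vecI) auto
  have GBR: "G = B * R"
  proof (rule eq_matI)
    fix i j assume i: "i < dim_row (B * R)" and j: "j < dim_col (B * R)"
    have jn: "j < n" and im: "i < m" using i j B R by auto
    have "(B * R) $$ (i, j) = Matrix.row B i \<bullet> col R j" using i j by simp
    also have "\<dots> = (B *\<^sub>v r j) $ i" using colR[OF jn] im B by simp
    also have "\<dots> = col G j $ i" using r[OF jn] by simp
    also have "\<dots> = G $$ (i, j)" using G im jn by simp
    finally show "G $$ (i, j) = (B * R) $$ (i, j)" ..
  qed (use G B R in auto)
  have GT: "G\<^sup>T = R\<^sup>T * B\<^sup>T" unfolding GBR using transpose_mult[OF B R] .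
  have BT: "B\<^sup>T \<in> carrier_mat ?c m" and RT: "R\<^sup>T \<in> carrier_mat n ?c" using B R by auto
  have "(\<lambda>y. G\<^sup>T *\<^sub>v y) ` carrier_vec m \<subseteq> (\<lambda>z. R\<^sup>T *\<^sub>v z) ` carrier_vec ?c"
  proof
    fix x assume "x \<in> (\<lambda>y. G\<^sup>T *\<^sub>v y) ` carrier_vec m"
    then obtain y where y: "y \<in> carrier_vec m" "x = G\<^sup>T *\<^sub>v y" by auto
    then have "x = R\<^sup>T *\<^sub>v (B\<^sup>T *\<^sub>v y)" using GT assoc_mult_mat_vec[OF RT BT] by simp
    moreover have "B\<^sup>T *\<^sub>v y \<in> carrier_vec ?c" using BT y by simp
    ultimately show "x \<in> (\<lambda>z. R\<^sup>T *\<^sub>v z) ` carrier_vec ?c" by auto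
  qed
  then have "card ((\<lambda>y. G\<^sup>T *\<^sub>v y) ` carrier_vec m) \<le> card ((\<lambda>z. R\<^sup>T *\<^sub>v z) ` carrier_vec ?c)"
    by (intro card_mono finite_imageI finite_carrier_vec)
  also have "\<dots> \<le> card (carrier_vec ?c :: 'a Matrix.vec set)" by (intro card_image_le finite_carrier_vec)
  also have "\<dots> = card ?C" using cC card_carrier_vec by metis
  finally show ?thesis .
qed

lemma card_img_transpose:
  fixes G :: "'a::{finite,field} mat"
  assumes G: "G \<in> carrier_mat m n"
  shows "card ((\<lambda>y. G\<^sup>T *\<^sub>v y) ` carrier_vec m) = card ((\<lambda>y. G *\<^sub>v y) ` carrier_vec n)"
  using card_img_transpose_le[OF G] card_img_transpose_le[of "G\<^sup>T" n m] G by simp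

lemma rowsp_eq:
  fixes X :: "'a::field mat"
  assumes X: "X \<in> carrier_mat h T"
  shows "rowsp T X = (\<lambda>y. X\<^sup>T *\<^sub>v y) ` carrier_vec h"
proof -
  interpret vec_space "TYPE('a)" T .
  show ?thesis unfolding rowsp_def using row_space_eq[OF X] X by auto
qed

lemma rowsp_mult:
  fixes X G :: "'a::field mat"
  assumes G: "G \<in> carrier_mat h h" and X: "X \<in> carrier_mat h T"
  shows "rowsp T (G * X) = (\<lambda>y. X\<^sup>T *\<^sub>v y) ` ((\<lambda>y. G\<^sup>T *\<^sub>v y) ` carrier_vec h)"
proof -
  have GX: "G * X \<in> carrier_mat h T" using G X by simp
  have XT: "X\<^sup>T \<in> carrier_mat T h" and GT: "G\<^sup>T \<in> carrier_mat h h" using G X by auto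
  have "rowsp T (G * X) = (\<lambda>y. (X\<^sup>T * G\<^sup>T) *\<^sub>v y) ` carrier_vec h"
    unfolding rowsp_eq[OF GX] transpose_mult[OF G X] ..
  also have "\<dots> = (\<lambda>y. X\<^sup>T *\<^sub>v (G\<^sup>T *\<^sub>v y)) ` carrier_vec h"
    using assoc_mult_mat_vec[OF XT GT] by (intro image_cong) auto
  finally show ?thesis by (simp add: image_image)
qed



lemma lspan_eq_iff:
  fixes zs :: "'a::{finite,field} Matrix.vec list"
  assumes W: "subsp n W" and cW: "card W = CARD('a) ^ length zs" and zs: "set zs \<subseteq> carrier_vec n"
  shows "lspan n zs = W \<longleftrightarrow> set zs \<subseteq> W \<and> indep n zs"
proof -
  have Wc: "W \<subseteq> carrier_vec n" using W by (simp add: subsp_def)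
  have finW: "finite W" using finite_subset[OF Wc finite_carrier_vec] .
  show ?thesis
  proof
    assume l: "lspan n zs = W"
    then have "set zs \<subseteq> W" using in_lspan[OF zs] by simp
    then show "set zs \<subseteq> W \<and> indep n zs" using indep_lspan_eq[OF W finW _ cW] l by simp
  next
    assume "set zs \<subseteq> W \<and> indep n zs"
    then show "lspan n zs = W" using indep_lspan_eq[OF W finW _ cW] by simp
  qed
qed

lemma main_count:
  fixes G :: "'a::{finite,field} mat"
  assumes G: "G \<in> carrier_mat h h"
    and U: "subsp T U" "card U = CARD('a) ^ h"
    and V: "subsp T V" "V \<subseteq> U" "card V = CARD('a) ^ d"
    and S: "card ((\<lambda>y. G\<^sup>T *\<^sub>v y) ` carrier_vec h) = CARD('a) ^ d"
  shows "card {X \<in> carrier_mat h T. rowsp T X = U \<and> rowsp T (G * X) = V}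
       = (\<Prod>i<d. CARD('a) ^ d - CARD('a) ^ i) * (\<Prod>i<h - d. CARD('a) ^ h - CARD('a) ^ (d + i))"
proof -
  let ?q = "CARD('a)"
  have q: "1 < ?q" using card_field_ge2[where 'a='a] by simp
  define S where "S = (\<lambda>y. G\<^sup>T *\<^sub>v y) ` carrier_vec h"
  have GT: "G\<^sup>T \<in> carrier_mat h h" using G by simp
  have sS: "subsp h S" unfolding S_def by (rule subsp_image[OF GT])
  have cS: "card S = ?q ^ d" using S unfolding S_def .
  have Sc: "S \<subseteq> carrier_vec h" using sS by (simp add: subsp_def)
  have "?q ^ d \<le> ?q ^ h"
    using card_mono[OF finite_carrier_vec Sc] cS card_carrier_vec[where 'a='a, of h] by simp
  then have dh: "d \<le> h" using q by simp
  obtain ws where ws: "length ws = d" "set ws \<subseteq> S" "indep h ws" "lspan h ws = S"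
    using exists_basis[OF sS cS] by blast
  have wsc: "set ws \<subseteq> carrier_vec h" using ws(2) Sc by auto
  obtain us where us: "length us = h - d" "set us \<subseteq> carrier_vec h" "indep h (us @ ws)"
    using exists_indep[OF subsp_carrier card_carrier_vec wsc ws(3), of "h - d"] ws(1) dh by auto
  define cs where "cs = us @ ws"
  have csc: "set cs \<subseteq> carrier_vec h" and lcs: "length cs = h"
    using us wsc ws(1) dh unfolding cs_def by auto
  have lspan_cs: "lspan h cs = carrier_vec h"
    using lspan_eq_iff[OF subsp_carrier _ csc] lcs card_carrier_vec[where 'a='a] us(3) csc
    unfolding cs_def by simp
  define \<Phi> where "\<Phi> X = map (\<lambda>c. X\<^sup>T *\<^sub>v c) cs" for X :: "'a mat"
  define L where "L = {zs. set zs \<subseteq> (carrier_vec T :: 'a Matrix.vec set) \<and> length zs = h}"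
  define D where "D = (carrier_mat h T :: 'a mat set)"
  have \<Phi>1: "rowsp T X = lspan T (\<Phi> X)" if X: "X \<in> carrier_mat h T" for X
  proof -
    have XT: "X\<^sup>T \<in> carrier_mat T h" using X by simp
    show ?thesis unfolding \<Phi>_def lspan_map[OF XT csc] lspan_cs rowsp_eq[OF X] ..
  qed
  have \<Phi>2: "rowsp T (G * X) = lspan T (drop (h - d) (\<Phi> X))" if X: "X \<in> carrier_mat h T" for X
  proof -
    have XT: "X\<^sup>T \<in> carrier_mat T h" using X by simp
    have "drop (h - d) (\<Phi> X) = map (\<lambda>c. X\<^sup>T *\<^sub>v c) ws"
      unfolding \<Phi>_def cs_def using us(1) by (simp add: drop_map)
    then show ?thesis
      unfolding rowsp_mult[OF G X] using lspan_map[OF XT wsc] ws(4) unfolding S_def by simp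
  qed
  have inj\<Phi>: "inj_on \<Phi> D"
  proof (rule inj_onI)
    fix X X' assume X: "X \<in> D" and X': "X' \<in> D" and e: "\<Phi> X = \<Phi> X'"
    have XT: "X\<^sup>T \<in> carrier_mat T h" and XT': "X'\<^sup>T \<in> carrier_mat T h" using X X' unfolding D_def by auto
    have ag: "\<And>c. c \<in> set cs \<Longrightarrow> X\<^sup>T *\<^sub>v c = X'\<^sup>T *\<^sub>v c" using e unfolding \<Phi>_def by (simp add: map_eq_conv)
    have "X\<^sup>T = X'\<^sup>T"
      by (rule mat_eq_on_carrier[OF XT XT']) (use agree_lspan[OF XT XT' csc ag] lspan_cs in auto)
    then show "X = X'" using arg_cong[of "X\<^sup>T" "X'\<^sup>T" transpose_mat] by simp
  qed
  have \<Phi>L: "\<Phi> ` D = L"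
  proof -
    have sub: "\<Phi> ` D \<subseteq> L"
    proof
      fix zs assume "zs \<in> \<Phi> ` D"
      then obtain X where X: "X \<in> carrier_mat h T" "zs = \<Phi> X" unfolding D_def by auto
      have XT: "X\<^sup>T \<in> carrier_mat T h" using X by simp
      have "X\<^sup>T *\<^sub>v c \<in> carrier_vec T" if "c \<in> set cs" for c
        using mult_mat_vec_carrier[OF XT] that csc by auto
      then show "zs \<in> L" unfolding L_def X(2) \<Phi>_def using lcs by auto
    qed
    have finL: "finite L" unfolding L_def by (intro finite_lists_length_eq finite_carrier_vec)
    have "card (\<Phi> ` D) = ?q ^ (h * T)" unfolding D_def using card_image[OF inj\<Phi>[unfolded D_def]] card_carrier_mat by simp
    moreover have "card L = ?q ^ (h * T)" unfolding L_def
      by (simp add: card_lists_length_eq finite_carrier_vec card_carrier_vec power_mult mult.commute)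
    ultimately show ?thesis using card_subset_eq[OF finL sub] by simp
  qed
  define P where "P zs = (lspan T zs = U \<and> lspan T (drop (h - d) zs) = V)" for zs
  have set1: "{X \<in> carrier_mat h T. rowsp T X = U \<and> rowsp T (G * X) = V} = {X \<in> D. P (\<Phi> X)}"
    unfolding D_def P_def using \<Phi>1 \<Phi>2 by auto
  have set2: "\<Phi> ` {X \<in> D. P (\<Phi> X)} = {zs \<in> L. P zs}" using \<Phi>L by auto
  have card1: "card {X \<in> D. P (\<Phi> X)} = card {zs \<in> L. P zs}"
    using card_image[OF inj_on_subset[OF inj\<Phi>, of "{X \<in> D. P (\<Phi> X)}"]] set2 by auto
  define A where "A = {b. length b = d \<and> set b \<subseteq> V \<and> indep T b}"
  define E where "E b = {a. length a = h - d \<and> set a \<subseteq> U \<and> indep T (a @ b)}" for b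
  have Uc: "U \<subseteq> carrier_vec T" and Vc: "V \<subseteq> carrier_vec T" using U V by (auto simp: subsp_def)
  have finU: "finite U" and finV: "finite V" using finite_subset[OF Uc finite_carrier_vec] finite_subset[OF Vc finite_carrier_vec] by auto
  have set3: "{zs \<in> L. P zs} = (\<lambda>(b,a). a @ b) ` (SIGMA b:A. E b)"
  proof (intro equalityI subsetI)
    fix zs assume "zs \<in> {zs \<in> L. P zs}"
    then have zsL: "set zs \<subseteq> carrier_vec T" "length zs = h" and p: "P zs" unfolding L_def by auto
    define a where "a = take (h - d) zs"
    define b where "b = drop (h - d) zs"
    have zab: "zs = a @ b" unfolding a_def b_def by simp
    have lb: "length b = d" unfolding b_def using zsL dh by simp
    have la: "length a = h - d" unfolding a_def using zsL dh by simp
    have bc: "set b \<subseteq> carrier_vec T" using zsL zab by auto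
    have bA: "b \<in> A" using p lspan_eq_iff[OF V(1) _ bc] V(3) lb unfolding P_def A_def b_def by simp
    have "set zs \<subseteq> U \<and> indep T zs" using p lspan_eq_iff[OF U(1) _ zsL(1)] U(2) zsL(2) unfolding P_def by simp
    then have aE: "a \<in> E b" unfolding E_def using la zab by auto
    show "zs \<in> (\<lambda>(b,a). a @ b) ` (SIGMA b:A. E b)"
      unfolding image_iff using bA aE zab by (intro bexI[where x="(b,a)"]) simp_all
  next
    fix zs assume "zs \<in> (\<lambda>(b,a). a @ b) ` (SIGMA b:A. E b)"
    then obtain a b where zs: "zs = a @ b" and bA: "b \<in> A" and aE: "a \<in> E b" by auto
    have lzs: "length zs = h" using zs bA aE dh unfolding A_def E_def by auto
    have sU: "set zs \<subseteq> U" using zs bA aE V(2) unfolding A_def E_def by auto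
    have zsc: "set zs \<subseteq> carrier_vec T" using sU Uc by auto
    have l1: "lspan T zs = U" using lspan_eq_iff[OF U(1) _ zsc] U(2) lzs sU aE zs unfolding E_def by simp
    have db: "drop (h - d) zs = b" using zs aE unfolding E_def by simp
    have bc: "set b \<subseteq> carrier_vec T" using bA Vc unfolding A_def by auto
    have l2: "lspan T b = V" using lspan_eq_iff[OF V(1) _ bc] V(3) bA unfolding A_def by simp
    show "zs \<in> {zs \<in> L. P zs}" unfolding L_def P_def using lzs zsc l1 l2 db by simp
  qed
  have inj2: "inj_on (\<lambda>(b,a). a @ b) (SIGMA b:A. E b)"
    by (auto simp: inj_on_def E_def)
  have finA: "finite A"
    by (rule finite_subset[of _ "{b. set b \<subseteq> V \<and> length b = d}"]) (auto simp: A_def intro: finite_lists_length_eq[OF finV])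
  have finE: "finite (E b)" for b
    by (rule finite_subset[of _ "{a. set a \<subseteq> U \<and> length a = h - d}"]) (auto simp: E_def intro: finite_lists_length_eq[OF finU])
  have cE: "card (E b) = (\<Prod>i<h - d. ?q ^ h - ?q ^ (d + i))" if "b \<in> A" for b
  proof -
    have b: "set b \<subseteq> U" "indep T b" "length b = d" using that V(2) unfolding A_def by auto
    show ?thesis using count_ext[OF U(1) U(2) b(1) b(2), of "h - d"] b(3) unfolding E_def by simp
  qed
  have cA: "card A = (\<Prod>i<d. ?q ^ d - ?q ^ i)"
  proof -
    have z: "set [] \<subseteq> V" "indep T ([] :: 'a Matrix.vec list)" by (auto simp: indep_Nil)
    have "A = {us. length us = d \<and> set us \<subseteq> V \<and> indep T (us @ [])}" unfolding A_def by simp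
    then show ?thesis using count_ext[OF V(1) V(3) z, of d] by simp
  qed
  have "card {zs \<in> L. P zs} = card (SIGMA b:A. E b)" unfolding set3 using card_image[OF inj2] by simp
  also have "\<dots> = (\<Sum>b\<in>A. card (E b))" using finA finE by (intro card_SigmaI) auto
  also have "\<dots> = card A * (\<Prod>i<h - d. ?q ^ h - ?q ^ (d + i))" using cE by simp
  finally show ?thesis unfolding set1 card1 cA .
qed



lemma is_subspace_subsp:
  assumes "is_subspace TYPE('a::field) T W" shows "subsp T W"
  using assms unfolding is_subspace_def VectorSpace.subspace_def submodule_def subsp_def
  by (auto simp: module_vec_simps)

lemma prod_split:
  fixes f :: "nat \<Rightarrow> 'b::comm_monoid_mult"
  shows "(\<Prod>i<d+m. f i) = (\<Prod>i<d. f i) * (\<Prod>i<m. f (d+i))"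
  by (induction m) (simp_all add: ac_simps)

lemma ratio_gauss:
  fixes q :: nat assumes q: "1 < q" and dh: "d \<le> h"
  shows "real (\<Prod>i<d. q^d - q^i) / real (\<Prod>i<d. q^h - q^i) = 1 / gauss_binom q h d"
proof -
  have f: "real (q^d - q^i) / real (q^h - q^i) = (real q ^ (d-i) - 1) / (real q ^ (h-i) - 1)"
    if i: "i < d" for i
  proof -
    have le: "q^i \<le> q^d" "q^i \<le> q^h"
      using power_increasing[of i d q] power_increasing[of i h q] i dh q by auto
    have di: "i + (d - i) = d" and hi: "i + (h - i) = h" using i dh by auto
    have pd: "real q ^ d = real q ^ i * real q ^ (d - i)" by (metis di power_add)
    have ph: "real q ^ h = real q ^ i * real q ^ (h - i)" by (metis hi power_add)
    have a: "real (q^d - q^i) = real q ^ i * (real q ^ (d-i) - 1)"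
    proof -
      have "real (q^d - q^i) = real q ^ d - real q ^ i" using le(1) by (simp add: of_nat_diff)
      also have "\<dots> = real q ^ i * (real q ^ (d-i) - 1)" unfolding pd by (simp add: right_diff_distrib)
      finally show ?thesis .
    qed
    have b: "real (q^h - q^i) = real q ^ i * (real q ^ (h-i) - 1)"
    proof -
      have "real (q^h - q^i) = real q ^ h - real q ^ i" using le(2) by (simp add: of_nat_diff)
      also have "\<dots> = real q ^ i * (real q ^ (h-i) - 1)" unfolding ph by (simp add: right_diff_distrib)
      finally show ?thesis .
    qed
    have c0: "real q ^ i \<noteq> 0" using q by simp
    show ?thesis unfolding a b by (rule nonzero_mult_divide_mult_cancel_left[OF c0])
  qed
  have nz: "real q ^ (d-i) - 1 \<noteq> 0" "real q ^ (h-i) - 1 \<noteq> 0" if "i < d" for i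
  proof -
    have q1: "1 < real q" using q by simp
    have "1 < real q ^ (d-i)" "1 < real q ^ (h-i)"
      using one_less_power[OF q1, of "d-i"] one_less_power[OF q1, of "h-i"] that dh by auto
    then show "real q ^ (d-i) - 1 \<noteq> 0" "real q ^ (h-i) - 1 \<noteq> 0" by auto
  qed
  have "real (\<Prod>i<d. q^d - q^i) / real (\<Prod>i<d. q^h - q^i)
      = (\<Prod>i<d. real (q^d - q^i) / real (q^h - q^i))"
    by (simp only: of_nat_prod prod_dividef)
  also have "\<dots> = (\<Prod>i<d. (real q ^ (d-i) - 1) / (real q ^ (h-i) - 1))"
    using f by (intro prod.cong) auto
  finally have r: "real (\<Prod>i<d. q^d - q^i) / real (\<Prod>i<d. q^h - q^i)
      = (\<Prod>i<d. (real q ^ (d-i) - 1) / (real q ^ (h-i) - 1))" .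
  have "gauss_binom q h d * (\<Prod>i<d. (real q ^ (d-i) - 1) / (real q ^ (h-i) - 1))
      = (\<Prod>i<d. (real q ^ (h-i) - 1) / (real q ^ (d-i) - 1) * ((real q ^ (d-i) - 1) / (real q ^ (h-i) - 1)))"
    unfolding gauss_binom_def by (rule prod.distrib[symmetric])
  also have "\<dots> = (\<Prod>i<d. 1)"
  proof (rule prod.cong[OF refl])
    fix i assume "i \<in> {..<d}"
    then have "i < d" by simp
    from nz[OF this] show "(real q ^ (h-i) - 1) / (real q ^ (d-i) - 1) * ((real q ^ (d-i) - 1) / (real q ^ (h-i) - 1)) = 1"
      by simp
  qed
  finally have e: "gauss_binom q h d * (\<Prod>i<d. (real q ^ (d-i) - 1) / (real q ^ (h-i) - 1)) = 1" by simp
  then have "gauss_binom q h d \<noteq> 0" by auto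
  with e show ?thesis unfolding r by (simp add: eq_divide_eq mult.commute)
qed

lemma count_zero:
  fixes G :: "'a::{finite,field} mat"
  assumes G: "G \<in> carrier_mat h h" and U: "card U = CARD('a) ^ h"
    and ne: "\<not> (V \<subseteq> U \<and> card ((\<lambda>y. G\<^sup>T *\<^sub>v y) ` carrier_vec h) = card V)"
  shows "{X \<in> carrier_mat h T. rowsp T X = U \<and> rowsp T (G * X) = V} = {}"
proof -
  have False if X: "X \<in> carrier_mat h T" and r1: "rowsp T X = U" and r2: "rowsp T (G * X) = V" for X
  proof -
    let ?S = "(\<lambda>y. G\<^sup>T *\<^sub>v y) ` carrier_vec h"
    have XT: "X\<^sup>T \<in> carrier_mat T h" using X by simp
    have GT: "G\<^sup>T \<in> carrier_mat h h" using G by simp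
    have Sc: "?S \<subseteq> carrier_vec h" using GT by auto
    have e1: "U = (\<lambda>y. X\<^sup>T *\<^sub>v y) ` carrier_vec h" using rowsp_eq[OF X] r1 by simp
    have e2: "V = (\<lambda>y. X\<^sup>T *\<^sub>v y) ` ?S" using rowsp_mult[OF G X] r2 by simp
    have "V \<subseteq> U" unfolding e1 e2 using Sc by auto
    moreover have "card V = card ?S"
    proof -
      have "card ((\<lambda>y. X\<^sup>T *\<^sub>v y) ` carrier_vec h) = card (carrier_vec h :: 'a Matrix.vec set)"
        using e1 U card_carrier_vec by metis
      then have "inj_on (\<lambda>y. X\<^sup>T *\<^sub>v y) (carrier_vec h)"
        by (intro eq_card_imp_inj_on finite_carrier_vec)
      then show ?thesis unfolding e2 by (intro card_image inj_on_subset[OF _ Sc])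
    qed
    ultimately show False using ne by simp
  qed
  then show ?thesis by auto
qed

theorem theorem3:
  fixes Gd :: "'a::{finite,field} mat pmf"
    and h T :: nat
    and U V :: "'a Matrix.vec set"
  assumes "1 \<le> h" and "h \<le> T"
    and "set_pmf Gd \<subseteq> carrier_mat h h"
    and "is_subspace TYPE('a) T U" and "sub_dim TYPE('a) T U = h"
    and "is_subspace TYPE('a) T V" and "sub_dim TYPE('a) T V \<le> h"
  shows "measure_pmf.prob
           (do { G \<leftarrow> Gd;
                 X \<leftarrow> pmf_of_set {X \<in> carrier_mat h T. rowsp T X = U};
                 return_pmf (G * X) })
           {Y. rowsp T Y = V}
         = (if V \<subseteq> U
            then measure_pmf.prob Gd {G. h - mrank h G = h - sub_dim TYPE('a) T V}
                 / gauss_binom CARD('a) h (sub_dim TYPE('a) T V)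
            else 0)"
proof -
  let ?q = "CARD('a)"
  define d where "d = sub_dim TYPE('a) T V"
  define B where "B = {X \<in> carrier_mat h T. rowsp T X = U}"
  define E where "E = {Y::'a mat. rowsp T Y = V}"
  define F where "F G = pmf_of_set B \<bind> (\<lambda>X. return_pmf (G * X))" for G :: "'a mat"
  define cnt where "cnt G = card {X \<in> carrier_mat h T. rowsp T X = U \<and> rowsp T (G * X) = V}" for G
  define gb where "gb = gauss_binom ?q h d"
  have q: "1 < ?q" using card_field_ge2[where 'a='a] by simp
  have sU: "subsp T U" and sV: "subsp T V" using assms(4,6) by (auto intro: is_subspace_subsp)
  have cU: "card U = ?q ^ h" using card_subspace[OF assms(4)] assms(5) by simp
  have cV: "card V = ?q ^ d" using card_subspace[OF assms(6)] unfolding d_def by simp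
  have dh: "d \<le> h" using assms(7) unfolding d_def .
  have cB: "card B = (\<Prod>i<h. ?q ^ h - ?q ^ i)"
  proof -
    have one: "(1\<^sub>m h :: 'a mat) \<in> carrier_mat h h" by simp
    have Beq: "B = {X \<in> carrier_mat h T. rowsp T X = U \<and> rowsp T ((1\<^sub>m h :: 'a mat) * X) = U}"
      unfolding B_def by auto
    have im: "(\<lambda>y. (1\<^sub>m h :: 'a mat)\<^sup>T *\<^sub>v y) ` carrier_vec h = (carrier_vec h :: 'a Matrix.vec set)"
      by (simp add: transpose_one)
    have cI: "card ((\<lambda>y. (1\<^sub>m h :: 'a mat)\<^sup>T *\<^sub>v y) ` carrier_vec h) = ?q ^ h"
      unfolding im by (rule card_carrier_vec)
    have "card B = (\<Prod>i<h. ?q ^ h - ?q ^ i) * (\<Prod>i<h - h. ?q ^ h - ?q ^ (h + i))"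
      unfolding Beq by (rule main_count[OF one sU cU sU subset_refl cU cI])
    then show ?thesis by simp
  qed
  have finB: "finite B" unfolding B_def by (rule finite_subset[OF _ finite_carrier_mat]) auto
  have "0 < card B" unfolding cB
  proof (rule prod_pos)
    fix i assume "i \<in> {..<h}"
    then have "?q ^ i < ?q ^ h" using q by (intro power_strict_increasing) auto
    then show "0 < ?q ^ h - ?q ^ i" by simp
  qed
  then have Bne: "B \<noteq> {}" by auto
  have finD: "finite (set_pmf Gd)" using finite_subset[OF assms(3) finite_carrier_mat] .
  have PF: "measure_pmf.prob (F G) E = real (cnt G) / real (card B)" for G
  proof -
    have "F G = map_pmf (\<lambda>X. G * X) (pmf_of_set B)" unfolding F_def map_pmf_def ..
    then have "measure_pmf.prob (F G) E = measure_pmf.prob (pmf_of_set B) ((\<lambda>X. G * X) -` E)"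
      by (simp add: measure_map_pmf)
    also have "\<dots> = real (card (B \<inter> (\<lambda>X. G * X) -` E)) / real (card B)"
      by (rule measure_pmf_of_set[OF Bne finB])
    also have "B \<inter> (\<lambda>X. G * X) -` E = {X \<in> carrier_mat h T. rowsp T X = U \<and> rowsp T (G * X) = V}"
      unfolding B_def E_def by auto
    finally show ?thesis unfolding cnt_def .
  qed
  have val: "real (cnt G) / real (card B) = (if V \<subseteq> U \<and> mrank h G = d then 1 / gb else 0)"
    if G: "G \<in> carrier_mat h h" for G
  proof -
    have cS: "card ((\<lambda>y. G\<^sup>T *\<^sub>v y) ` carrier_vec h) = ?q ^ mrank h G"
      using card_img_transpose[OF G] card_colspace[OF G] by simp
    show ?thesis
    proof (cases "V \<subseteq> U \<and> mrank h G = d")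
      case True
      have "cnt G = (\<Prod>i<d. ?q ^ d - ?q ^ i) * (\<Prod>i<h - d. ?q ^ h - ?q ^ (d + i))"
        unfolding cnt_def using main_count[OF G sU cU sV _ cV] True cS by simp
      moreover have "card B = (\<Prod>i<d. ?q ^ h - ?q ^ i) * (\<Prod>i<h - d. ?q ^ h - ?q ^ (d + i))"
        unfolding cB using prod_split[of "\<lambda>i. ?q ^ h - ?q ^ i" d "h - d"] dh by simp
      moreover have "(\<Prod>i<h - d. ?q ^ h - ?q ^ (d + i)) > 0"
      proof (rule prod_pos)
        fix i assume "i \<in> {..<h - d}"
        then have "?q ^ (d + i) < ?q ^ h" using q by (intro power_strict_increasing) auto
        then show "0 < ?q ^ h - ?q ^ (d + i)" by simp
      qed
      ultimately have "real (cnt G) / real (card B) = real (\<Prod>i<d. ?q ^ d - ?q ^ i) / real (\<Prod>i<d. ?q ^ h - ?q ^ i)"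
        by (simp only: of_nat_mult nonzero_mult_divide_mult_cancel_right of_nat_0_less_iff less_irrefl
            of_nat_eq_0_iff gr_implies_not0 not_False_eq_True)
      then show ?thesis using ratio_gauss[OF q dh] True unfolding gb_def by simp
    next
      case False
      have "\<not> (V \<subseteq> U \<and> card ((\<lambda>y. G\<^sup>T *\<^sub>v y) ` carrier_vec h) = card V)"
        using False cS cV q by (auto dest: power_inject_exp)
      then have "{X \<in> carrier_mat h T. rowsp T X = U \<and> rowsp T (G * X) = V} = {}"
        by (rule count_zero[OF G cU])
      then have "cnt G = 0" unfolding cnt_def by (simp only: card.empty)
      then show ?thesis using False by auto
    qed
  qed
  have finF: "finite (set_pmf (F G))" for G
    unfolding F_def using finB Bne by (simp add: set_bind_pmf set_pmf_of_set)
  have LHS: "measure_pmf.prob (Gd \<bind> F) E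
      = (\<Sum>G\<in>set_pmf Gd. pmf Gd G * (if V \<subseteq> U \<and> mrank h G = d then 1 / gb else 0))"
  proof -
    have "measure_pmf.prob (Gd \<bind> F) E = measure_pmf.expectation (Gd \<bind> F) (indicator E)" by simp
    also have "\<dots> = (\<Sum>G\<in>set_pmf Gd. pmf Gd G *\<^sub>R measure_pmf.expectation (F G) (indicator E))"
      by (rule pmf_expectation_bind[OF finD finF subset_refl])
    also have "\<dots> = (\<Sum>G\<in>set_pmf Gd. pmf Gd G * (if V \<subseteq> U \<and> mrank h G = d then 1 / gb else 0))"
    proof (rule sum.cong[OF refl])
      fix G assume "G \<in> set_pmf Gd"
      then have G: "G \<in> carrier_mat h h" using assms(3) by auto
      have "measure_pmf.expectation (F G) (indicator E) = measure_pmf.prob (F G) E" by simp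
      then show "pmf Gd G *\<^sub>R measure_pmf.expectation (F G) (indicator E)
          = pmf Gd G * (if V \<subseteq> U \<and> mrank h G = d then 1 / gb else 0)"
        using PF val[OF G] by simp
    qed
    finally show ?thesis .
  qed
  have mr: "mrank h G \<le> h" if G: "G \<in> carrier_mat h h" for G :: "'a mat"
  proof -
    have sub: "(\<lambda>y. G *\<^sub>v y) ` carrier_vec h \<subseteq> carrier_vec h"
      using mult_mat_vec_carrier[OF G] by auto
    have "?q ^ mrank h G \<le> ?q ^ h"
      using card_colspace[OF G] card_mono[OF finite_carrier_vec sub]
        card_carrier_vec[where 'a='a, of h] by simp
    then show ?thesis using q by simp
  qed
  have RHS: "measure_pmf.prob Gd {G. h - mrank h G = h - d}
      = (\<Sum>G\<in>set_pmf Gd. pmf Gd G * (if mrank h G = d then 1 else 0))"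
  proof -
    have "measure_pmf.prob Gd {G. h - mrank h G = h - d} = measure_pmf.prob Gd ({G. h - mrank h G = h - d} \<inter> set_pmf Gd)"
      by (simp add: measure_Int_set_pmf)
    also have "\<dots> = sum (pmf Gd) ({G. h - mrank h G = h - d} \<inter> set_pmf Gd)"
      using finD by (intro measure_measure_pmf_finite) auto
    also have "{G. h - mrank h G = h - d} \<inter> set_pmf Gd = {G \<in> set_pmf Gd. mrank h G = d}"
    proof -
      have "h - mrank h G = h - d \<longleftrightarrow> mrank h G = d" if "G \<in> set_pmf Gd" for G
      proof -
        have "mrank h G \<le> h" using mr[of G] that assms(3) by auto
        then show ?thesis using dh by auto
      qed
      then show ?thesis by auto
    qed
    also have "sum (pmf Gd) {G \<in> set_pmf Gd. mrank h G = d} = (\<Sum>G\<in>set_pmf Gd. pmf Gd G * (if mrank h G = d then 1 else 0))"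
      using finD by (simp add: sum.inter_filter) (intro sum.cong, auto)
    finally show ?thesis .
  qed
  have goalF: "(do { G \<leftarrow> Gd; X \<leftarrow> pmf_of_set {X \<in> carrier_mat h T. rowsp T X = U}; return_pmf (G * X) }) = Gd \<bind> F"
    unfolding F_def B_def ..
  show ?thesis
  proof (cases "V \<subseteq> U")
    case True
    have "(\<Sum>G\<in>set_pmf Gd. pmf Gd G * (if V \<subseteq> U \<and> mrank h G = d then 1 / gb else 0))
        = (\<Sum>G\<in>set_pmf Gd. pmf Gd G * (if mrank h G = d then 1 else 0)) / gb"
      using True by (simp add: sum_divide_distrib) (intro sum.cong, auto)
    then show ?thesis using True LHS RHS unfolding goalF E_def d_def gb_def by simp
  next
    case False
    then show ?thesis using LHS unfolding goalF E_def d_def by simp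
  qed
qed


end
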